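(* Let $p,d,M,N,r\in\mathbb{N}$ and let $A_1,\ldots,A_p:\mathbb{R}^d\to\mathbb{R}^{M\times N}$ be continuous mappings such that the set of points $\mathbf{y}\in\mathbb{R}^d$ for which $\operatorname{rank}(A_i(\mathbf{y}))<r$ for every $i\in[p]$ has Lebesgue measure zero. Define $A:\mathbb{R}^p\times\mathbb{R}^d\to\mathbb{R}^{M\times N}$ by $A(\mathbf{x},\mathbf{y}) := \sum_{i=1}^p x_i A_i(\mathbf{y})$. Then the set of points $(\mathbf{x},\mathbf{y})\in\mathbb{R}^{p+d}$ for which $\operatorname{rank}(A(\mathbf{x},\mathbf{y}))<r$ has Lebesgue measure zero.
   Context: $[p]=\{1,\ldots,p\}$; $x_i$ denotes the $i$-th entry of $\mathbf{x}$. *)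

theory Defs
  imports "HOL-Analysis.Analysis"
begin

end

theory Submission
  imports Defs
begin

lemma dim_Un_card_le:
  fixes A F :: "(real^'n) set"
  assumes "finite F"
  shows "dim (A \<union> F) \<le> dim A + card F"
proof -
  obtain Ba where Ba: "Ba \<subseteq> A" "independent Ba" "A \<subseteq> span Ba" "card Ba = dim A"
    using basis_exists by blast
  have fBa: "finite Ba" using Ba(2) independent_bound_general by blast
  have "A \<union> F \<subseteq> span (Ba \<union> F)"
    using Ba(3) span_mono[of Ba "Ba \<union> F"] span_superset[of "Ba \<union> F"] by blast
  then have "dim (A \<union> F) \<le> card (Ba \<union> F)"
    using dim_le_card fBa assms by blast
  also have "\<dots> \<le> card Ba + card F" by (rule card_Un_le)
  finally show ?thesis using Ba(4) by simp
qed

lemma columns_chi: "columns (\<chi> a i. (c i :: real^'m) $ a) = range c"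
  by (auto simp: columns_def column_def vec_eq_iff)

lemma rank_ge_card:
  fixes M :: "real^'n^'m" and c g :: "'m \<Rightarrow> real^'m"
  assumes det: "det (\<chi> a i. (if i \<in> P then c i else g i) $ a) \<noteq> 0"
    and col: "\<And>i. i \<in> P \<Longrightarrow> c i \<in> range (\<lambda>x. M *v x)"
  shows "card P \<le> rank M"
proof -
  let ?K = "(\<chi> a i. (if i \<in> P then c i else g i) $ a)"
  have "CARD('m) \<le> rank ?K" using det det_eq_0_rank[of ?K] by linarith
  also have "rank ?K = dim (range (\<lambda>i. if i \<in> P then c i else g i))"
    by (simp add: column_rank_def columns_chi)
  also have "\<dots> \<le> dim (range (\<lambda>x. M *v x) \<union> g ` (- P))"
    by (rule dim_subset) (auto simp: col)
  also have "\<dots> \<le> dim (range (\<lambda>x. M *v x)) + card (g ` (- P))"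
    by (rule dim_Un_card_le) simp
  also have "\<dots> \<le> rank M + card (- P)"
    by (simp add: rank_dim_range card_image_le)
  finally have "CARD('m) \<le> rank M + card (- P)" .
  moreover have "card (- P) = CARD('m) - card P"
    by (simp add: Compl_eq_Diff_UNIV card_Diff_subset)
  moreover have "card P \<le> CARD('m)" by (simp add: card_mono)
  ultimately show ?thesis by linarith
qed

lemma rank_witness:
  fixes N :: "real^'n^'m"
  assumes "r \<le> rank N"
  obtains P :: "'m set" and w :: "'m \<Rightarrow> real^'n" and g :: "'m \<Rightarrow> real^'m"
  where "card P = r" "\<And>i. i \<in> P \<Longrightarrow> N *v w i = g i" "det (\<chi> a i. g i $ a) \<noteq> 0"
proof -
  obtain Bs where Bs: "Bs \<subseteq> range (\<lambda>x. N *v x)" "independent Bs" "card Bs = dim (range (\<lambda>x. N *v x))"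
    by (rule basis_exists)
  then have "r \<le> card Bs" using assms by (simp add: rank_dim_range)
  then obtain S where S: "S \<subseteq> Bs" "card S = r" "finite S" by (rule obtain_subset_with_card_n)
  have iS: "independent S" by (rule independent_mono[OF Bs(2) S(1)])
  obtain B where B: "S \<subseteq> B" "B \<subseteq> UNIV" "independent B" "UNIV \<subseteq> span B"
    by (rule maximal_independent_subset_extend[OF subset_UNIV iS])
  have fB: "finite B" using independent_bound_general[OF B(3)] by (rule conjunct1)
  have spB: "span B = UNIV" using B(4) by auto
  have "card B = dim B" using B(3) by (simp add: dim_eq_card_independent)
  also have "\<dots> = dim (span B)" by (rule dim_span[symmetric])
  also have "\<dots> = dim (UNIV :: (real^'m) set)" by (simp only: spB)
  also have "\<dots> = CARD('m)" by simp
  finally have cB: "card B = CARD('m)" .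
  obtain g where g: "bij_betw g (UNIV::'m set) B"
    using finite_same_card_bij[of "UNIV::'m set" B] fB cB by auto
  define P where "P = {i. g i \<in> S}"
  have "g ` P = S" using g B(1) unfolding P_def bij_betw_def by auto
  moreover have "inj_on g P" using g unfolding bij_betw_def by (auto intro: inj_on_subset)
  ultimately have cP: "card P = r" using S(2) card_image[of g P] by simp
  define w where "w i = (SOME v. N *v v = g i)" for i
  have w: "N *v w i = g i" if "i \<in> P" for i
  proof -
    have "g i \<in> range (\<lambda>x. N *v x)" using that Bs(1) S(1) unfolding P_def by auto
    then obtain v where "g i = N *v v" by (rule rangeE)
    then show ?thesis unfolding w_def by (metis (mono_tags) someI)
  qed
  have rg: "range g = B" using g by (simp add: bij_betw_def)
  have "rank (\<chi> a i. g i $ a) = dim B"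
    by (simp add: column_rank_def columns_chi rg)
  then have "rank (\<chi> a i. g i $ a) = CARD('m)"
    using B(3) cB by (simp add: dim_eq_card_independent)
  then have dt: "det (\<chi> a i. g i $ a) \<noteq> 0" by (simp add: det_eq_0_rank)
  show ?thesis by (rule that, rule cP, erule w, rule dt)
qed

lemma continuous_on_det_cols:
  fixes h :: "'m \<Rightarrow> 'a::topological_space \<Rightarrow> real^'m"
  assumes "\<And>i. continuous_on UNIV (h i)"
  shows "continuous_on UNIV (\<lambda>x. det (\<chi> a i. h i x $ a))"
  unfolding det_def using assms
  by (intro continuous_intros) simp

lemma continuous_on_mv: "continuous_on UNIV (\<lambda>M::real^'n^'m. M *v v)"
proof -
  have "(\<lambda>M::real^'n^'m. M *v v) = (\<lambda>M. \<chi> a. \<Sum>j\<in>UNIV. M $ a $ j * v $ j)"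
    by (simp add: matrix_vector_mult_def)
  moreover have "continuous_on UNIV (\<lambda>M::real^'n^'m. \<chi> a. \<Sum>j\<in>UNIV. M $ a $ j * v $ j)"
    by (intro continuous_on_vec_lambda continuous_intros)
  ultimately show ?thesis by metis
qed

lemma open_rank_ge: "open {M :: real^'n^'m. r \<le> rank M}"
proof (subst open_subopen, intro ballI)
  fix N :: "real^'n^'m" assume "N \<in> {M. r \<le> rank M}"
  then have rN: "r \<le> rank N" by simp
  obtain P :: "'m set" and w :: "'m \<Rightarrow> real^'n" and g :: "'m \<Rightarrow> real^'m"
    where P: "card P = r" "\<And>i. i \<in> P \<Longrightarrow> N *v w i = g i" "det (\<chi> a i. g i $ a) \<noteq> 0"
    using rank_witness[OF rN] by blast
  define f where "f M = det (\<chi> a i. (if i \<in> P then M *v w i else g i) $ a)" for M :: "real^'n^'m"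
  have cf: "continuous_on UNIV f" unfolding f_def
  proof (rule continuous_on_det_cols)
    fix i show "continuous_on UNIV (\<lambda>M::real^'n^'m. if i \<in> P then M *v w i else g i)"
      by (cases "i \<in> P") (simp_all add: continuous_on_mv)
  qed
  have "(\<lambda>i. if i \<in> P then N *v w i else g i) = g" using P(2) by auto
  then have "f N = det (\<chi> a i. g i $ a)" unfolding f_def by metis
  then have "N \<in> {M. f M \<noteq> 0}" using P(3) by simp
  moreover have "open {M. f M \<noteq> 0}" using open_Collect_neq[OF cf continuous_on_const] by simp
  moreover have "{M. f M \<noteq> 0} \<subseteq> {M. r \<le> rank M}"
  proof
    fix M assume "M \<in> {M. f M \<noteq> 0}"
    then have "f M \<noteq> 0" by simp
    then have "card P \<le> rank M" unfolding f_def by (rule rank_ge_card) auto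
    then show "M \<in> {M. r \<le> rank M}" using P(1) by simp
  qed
  ultimately show "\<exists>T. open T \<and> N \<in> T \<and> T \<subseteq> {M. r \<le> rank M}" by blast
qed

lemma rpf_affine: "real_polynomial_function (\<lambda>s::real. (u + s *\<^sub>R v :: real^'m) $ a)"
proof -
  have "(\<lambda>s::real. (u + s *\<^sub>R v) $ a) = (\<lambda>s. u $ a + s * v $ a)" by simp
  moreover have "real_polynomial_function (\<lambda>s::real. u $ a + s * v $ a)"
    by (intro real_polynomial_function.intros bounded_linear_mult_left)
  ultimately show ?thesis by metis
qed

lemma finite_bad_t:
  fixes N Bm :: "real^'n^'m"
  assumes "r \<le> rank N"
  shows "finite {t::real. rank (Bm + t *\<^sub>R N) < r}"
proof -
  obtain P :: "'m set" and w :: "'m \<Rightarrow> real^'n" and g :: "'m \<Rightarrow> real^'m"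
    where P: "card P = r" "\<And>i. i \<in> P \<Longrightarrow> N *v w i = g i" "det (\<chi> a i. g i $ a) \<noteq> 0"
    using rank_witness[OF assms] by blast
  define h where "h s i = g i + (if i \<in> P then s *\<^sub>R (Bm *v w i) else 0)" for s :: real and i
  define q where "q s = det (\<chi> a i. h s i $ a)" for s
  have "real_polynomial_function q"
    unfolding q_def det_def
  proof (intro real_polynomial_function_sum real_polynomial_function_prod real_polynomial_function.intros(4)
      real_polynomial_function.intros(2) finite_Collect_subsets finite)
    fix p k
    have "(\<lambda>s. (\<chi> a i. h s i $ a) $ k $ p k) = (\<lambda>s. (g (p k) + s *\<^sub>R (if p k \<in> P then Bm *v w (p k) else 0)) $ k)"
      by (simp add: h_def)
    then show "real_polynomial_function (\<lambda>s. (\<chi> a i. h s i $ a) $ k $ p k)"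
      using rpf_affine by metis
  qed
  then obtain c n where qc: "q = (\<lambda>x. \<Sum>i\<le>n. c i * x^i)"
    using real_polynomial_function_imp_sum by blast
  have "h 0 = g" by (auto simp: h_def)
  then have "q 0 \<noteq> 0" using P(3) by (simp add: q_def)
  moreover have "q 0 = c 0" unfolding qc by (simp add: zero_power)
  ultimately have "c 0 \<noteq> 0" by simp
  then have fin: "finite {z. q z = 0}" unfolding qc by (rule polyfun_roots_finite[where k=0]) simp_all
  have "{t::real. rank (Bm + t *\<^sub>R N) < r} \<subseteq> insert 0 ((\<lambda>s. 1 / s) ` {z. q z = 0})"
  proof
    fix t :: real assume t: "t \<in> {t. rank (Bm + t *\<^sub>R N) < r}"
    show "t \<in> insert 0 ((\<lambda>s. 1 / s) ` {z. q z = 0})"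
    proof (cases "t = 0")
      case False
      have "q (1/t) = 0"
      proof (rule ccontr)
        assume "q (1/t) \<noteq> 0"
        moreover have e: "\<And>i. (if i \<in> P then h (1/t) i else g i) = h (1/t) i" by (auto simp: h_def)
        ultimately have "det (\<chi> a i. (if i \<in> P then h (1/t) i else g i) $ a) \<noteq> 0"
          by (simp only: q_def e) simp
        then have "card P \<le> rank (Bm + t *\<^sub>R N)"
        proof (rule rank_ge_card)
          fix i assume i: "i \<in> P"
          have "(Bm + t *\<^sub>R N) *v ((1/t) *\<^sub>R w i) = h (1/t) i"
            using i False P(2)[OF i]
            by (simp add: h_def algebra_simps scaleR_matrix_vector_assoc[symmetric])
          then show "h (1/t) i \<in> range (\<lambda>x. (Bm + t *\<^sub>R N) *v x)" by (metis rangeI)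
        qed
        then show False using t P(1) by simp
      qed
      then show ?thesis by (simp add: image_iff) (metis divide_divide_eq_right div_by_1 mult_1 )
    qed simp
  qed
  moreover have "finite (insert 0 ((\<lambda>s. 1 / s) ` {z. q z = 0}))" using fin by simp
  ultimately show ?thesis by (rule finite_subset)
qed

lemma line_null:
  fixes Z :: "('a::euclidean_space) set" and v :: 'a
  assumes Zb: "Z \<in> sets borel" and sec: "\<And>w. {t::real. w + t *\<^sub>R v \<in> Z} \<in> null_sets lborel"
  shows "Z \<in> null_sets lborel"
proof -
  define f where "f = (\<lambda>(t::real, w::'a). w + t *\<^sub>R v)"
  have cf: "continuous_on UNIV f" unfolding f_def case_prod_unfold
    by (intro continuous_intros)
  define E where "E = f -` Z"
  have Eb: "E \<in> sets borel" unfolding E_def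
    using measurable_sets_borel[OF borel_measurable_continuous_onI[OF cf] Zb] .
  then have Es: "E \<in> sets (lborel \<Otimes>\<^sub>M lborel)" by (subst lborel_prod) simp
  have transl: "emeasure lborel ((\<lambda>w. w + c) -` Z) = emeasure lborel Z" for c :: 'a
  proof -
    have "emeasure lborel Z = emeasure (distr lborel borel ((+) c)) Z" by (simp add: lborel_distr_plus)
    also have "\<dots> = emeasure lborel ((+) c -` Z \<inter> space lborel)"
      by (rule emeasure_distr) (simp_all add: Zb)
    also have "(+) c -` Z \<inter> space lborel = (\<lambda>w. w + c) -` Z" by (auto simp: add.commute)
    finally show ?thesis by simp
  qed
  have "emeasure (lborel \<Otimes>\<^sub>M lborel) E = (\<integral>\<^sup>+ t. emeasure lborel (Pair t -` E) \<partial>lborel)"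
    by (rule lborel.emeasure_pair_measure_alt[OF Es])
  also have "\<dots> = (\<integral>\<^sup>+ t. emeasure lborel Z \<partial>(lborel::real measure))"
  proof (rule nn_integral_cong)
    fix t :: real
    have "Pair t -` E = (\<lambda>w. w + t *\<^sub>R v) -` Z" by (auto simp: E_def f_def)
    then show "emeasure lborel (Pair t -` E) = emeasure lborel Z" by (simp add: transl)
  qed
  also have "\<dots> = emeasure lborel Z * \<infinity>" by simp
  finally have e1: "emeasure (lborel \<Otimes>\<^sub>M lborel) E = emeasure lborel Z * \<infinity>" .
  have "emeasure (lborel \<Otimes>\<^sub>M lborel) E = (\<integral>\<^sup>+ w. emeasure lborel ((\<lambda>t. (t, w)) -` E) \<partial>lborel)"
    by (rule lborel_pair.emeasure_pair_measure_alt2[OF Es])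
  also have "\<dots> = (\<integral>\<^sup>+ w. 0 \<partial>(lborel::'a measure))"
  proof (rule nn_integral_cong)
    fix w :: 'a
    have "(\<lambda>t. (t, w)) -` E = {t::real. w + t *\<^sub>R v \<in> Z}" by (auto simp: E_def f_def)
    then show "emeasure lborel ((\<lambda>t. (t, w)) -` E) = 0" using sec[of w] by (simp add: null_sets_def)
  qed
  also have "\<dots> = 0" by simp
  finally have "emeasure lborel Z * \<infinity> = 0" using e1 by simp
  then have "emeasure lborel Z = 0" by simp
  then show ?thesis using Zb by (intro null_setsI) simp_all
qed

lemma sum_axis_shift:
  fixes A :: "'p::finite \<Rightarrow> real^'n^'m"
  shows "(\<Sum>i\<in>UNIV. (w + t *\<^sub>R axis j 1) $ i *\<^sub>R A i) = (\<Sum>i\<in>UNIV. w $ i *\<^sub>R A i) + t *\<^sub>R A j"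
proof -
  have "\<And>i. (w + t *\<^sub>R axis j 1) $ i *\<^sub>R A i = w $ i *\<^sub>R A i + (if i = j then t *\<^sub>R A j else 0)"
    by (simp add: axis_def scaleR_add_left)
  then show ?thesis by (simp add: sum.distrib)
qed

theorem lemma2:
  fixes A :: "'p::finite \<Rightarrow> real^'d \<Rightarrow> real^'n^'m"
    and r :: nat
  assumes cont: "\<And>i. continuous_on UNIV (A i)"
    and null: "{y. \<forall>i. rank (A i y) < r} \<in> null_sets lebesgue"
  shows "{(x :: real^'p, y :: real^'d).
            rank (\<Sum>i\<in>UNIV. (x $ i) *\<^sub>R A i y) < r} \<in> null_sets lebesgue"
proof -
  define L where "L = (\<lambda>z::(real^'p) \<times> (real^'d). \<Sum>i\<in>UNIV. (fst z $ i) *\<^sub>R A i (snd z))"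
  define S where "S = {(x :: real^'p, y :: real^'d). rank (\<Sum>i\<in>UNIV. (x $ i) *\<^sub>R A i y) < r}"
  have cL: "continuous_on UNIV L" unfolding L_def
    by (intro continuous_intros continuous_on_compose2[OF cont]) auto
  have "S = - (L -` {M. r \<le> rank M})" by (auto simp: S_def L_def)
  moreover have "open (L -` {M. r \<le> rank M})" by (rule open_vimage[OF open_rank_ge cL])
  ultimately have clS: "closed S" by (simp add: closed_def)
  then have Sb: "S \<in> sets borel" by (rule borel_closed)
  then have Ss: "S \<in> sets (lborel \<Otimes>\<^sub>M lborel)" by (subst lborel_prod) simp
  obtain N' where N': "N' \<in> null_sets lborel" "{y. \<forall>i. rank (A i y) < r} \<subseteq> N'"
    using null[unfolded null_sets_completion_iff2] by (elim bexE) blast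
  have sec: "(\<lambda>x. (x, y)) -` S \<in> null_sets lborel" if y: "y \<notin> N'" for y
  proof -
    have "y \<notin> {y. \<forall>i. rank (A i y) < r}" using y N'(2) by (meson subsetD)
    then obtain j where j: "r \<le> rank (A j y)" by (auto simp: not_less)
    have Zb: "(\<lambda>x. (x, y)) -` S \<in> sets borel"
      by (rule measurable_sets_borel[OF borel_measurable_continuous_onI Sb]) (intro continuous_intros)
    show ?thesis
    proof (rule line_null[OF Zb, of "axis j 1"])
      fix w :: "real^'p"
      have "{t. w + t *\<^sub>R axis j 1 \<in> (\<lambda>x. (x, y)) -` S}
          = {t. rank ((\<Sum>i\<in>UNIV. w $ i *\<^sub>R A i y) + t *\<^sub>R A j y) < r}"
        by (simp only: S_def vimage_def mem_Collect_eq case_prod_conv sum_axis_shift)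
      moreover have "finite {t. rank ((\<Sum>i\<in>UNIV. w $ i *\<^sub>R A i y) + t *\<^sub>R A j y) < r}"
        by (rule finite_bad_t[OF j])
      ultimately show "{t. w + t *\<^sub>R axis j 1 \<in> (\<lambda>x. (x, y)) -` S} \<in> null_sets lborel"
        by (simp add: finite_imp_null_set_lborel)
    qed
  qed
  have "emeasure (lborel \<Otimes>\<^sub>M lborel) S = (\<integral>\<^sup>+ y. emeasure lborel ((\<lambda>x. (x, y)) -` S) \<partial>lborel)"
    by (rule lborel_pair.emeasure_pair_measure_alt2[OF Ss])
  also have "\<dots> = (\<integral>\<^sup>+ y. 0 \<partial>(lborel::(real^'d) measure))"
  proof (rule nn_integral_cong_AE)
    show "AE y in lborel. emeasure lborel ((\<lambda>x. (x, y)) -` S) = 0"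
    proof (rule AE_I'[OF N'(1)])
      show "{y \<in> space lborel. emeasure lborel ((\<lambda>x. (x, y)) -` S) \<noteq> 0} \<subseteq> N'"
        using sec by (auto simp: null_sets_def)
    qed
  qed
  also have "\<dots> = 0" by simp
  finally have "emeasure (lborel \<Otimes>\<^sub>M lborel) S = 0" .
  then have "S \<in> null_sets (lborel \<Otimes>\<^sub>M lborel)" using Ss by (intro null_setsI)
  then have "S \<in> null_sets lborel" by (simp add: lborel_prod)
  then show ?thesis unfolding S_def by (rule null_sets_completionI)
qed

end
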